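(* Let $\sigma=(g_1,\dots,g_T)\in\Sigma$ and $t\in[T]$. Let $\lambda_{t-1}$ and $\lambda_t$ be the optimal Lagrange multipliers associated with the inventory constraint of the offline problems for $\sigma^{[1:t-1]}$ and $\sigma^{[1:t]}$ respectively (with $\lambda_0=0$), and let $\tilde v_t$ be the $t$-th coordinate of an optimal solution of the offline problem for $\sigma^{[1:t]}$. Then $$\eta_{OPT}(\sigma^{[1:t]})-\eta_{OPT}(\sigma^{[1:t-1]})\ \ge\ g_t(\tilde v_t)-\lambda_t\tilde v_t,$$ and $$\eta_{OPT}(\sigma^{[1:t]})-\eta_{OPT}(\sigma^{[1:t-1]})\ \le\ g_t(\tilde v_t)-\lambda_{t-1}\tilde v_t\ \le\ g_t(\hat v_t),$$ where $\hat v_t$ is a maximizer of $g_t$ over $[0,\Delta]$.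
   Context: Fix $\Delta>0$ and $0<m\le M$. Let $\mathcal G$ be the family of all functions $g:[0,\Delta]\to\mathbb{R}$ that are concave, increasing and differentiable on $[0,\Delta]$ with $g(0)=0$ and $g'(0)\in[m,M]$. An input is a finite sequence $\sigma=(g_1,\dots,g_T)$, $T\ge1$, $g_t\in\mathcal G$; $\Sigma$ is the set of all inputs. For $0\le t\le T$, $\sigma^{[1:t]}=(g_1,\dots,g_t)$ ($\sigma^{[1:0]}$ is empty). For a finite sequence $(g_1,\dots,g_t)$, the offline problem is $\max\sum_{\tau=1}^t g_\tau(v_\tau)$ subject to $\sum_{\tau=1}^t v_\tau\le\Delta$ and $v_\tau\ge0$, and $\eta_{OPT}(\sigma^{[1:t]})$ denotes its optimal value; $\eta_{OPT}$ of the empty sequence is $0$. The inventory constraint is the constraint $\sum_\tau v_\tau\le\Delta$. *)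

theory Defs
  imports "HOL-Analysis.Analysis"
begin

definition inG :: "real \<Rightarrow> real \<Rightarrow> real \<Rightarrow> (real \<Rightarrow> real) \<Rightarrow> bool" where
  "inG \<Delta> m M g \<longleftrightarrow>
     concave_on {0..\<Delta>} g \<and>
     mono_on {0..\<Delta>} g \<and>
     (\<forall>x\<in>{0..\<Delta>}. g differentiable (at x within {0..\<Delta>})) \<and>
     g 0 = 0 \<and>
     (\<exists>D. (g has_real_derivative D) (at 0 within {0..\<Delta>}) \<and> m \<le> D \<and> D \<le> M)"

(* Decision vectors are v :: nat \<Rightarrow> real; coordinate i (0-based) belongs to gs ! i. *)
definition feasible :: "real \<Rightarrow> (real \<Rightarrow> real) list \<Rightarrow> (nat \<Rightarrow> real) \<Rightarrow> bool" where
  "feasible \<Delta> gs v \<longleftrightarrow> (\<forall>i<length gs. 0 \<le> v i) \<and> (\<Sum>i<length gs. v i) \<le> \<Delta>"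

definition objective :: "(real \<Rightarrow> real) list \<Rightarrow> (nat \<Rightarrow> real) \<Rightarrow> real" where
  "objective gs v = (\<Sum>i<length gs. (gs ! i) (v i))"

definition eta_OPT :: "real \<Rightarrow> (real \<Rightarrow> real) list \<Rightarrow> real" where
  "eta_OPT \<Delta> gs = Sup {objective gs v | v. feasible \<Delta> gs v}"

definition opt_solution :: "real \<Rightarrow> (real \<Rightarrow> real) list \<Rightarrow> (nat \<Rightarrow> real) \<Rightarrow> bool" where
  "opt_solution \<Delta> gs v \<longleftrightarrow> feasible \<Delta> gs v \<and> objective gs v = eta_OPT \<Delta> gs"

definition lagrangian :: "real \<Rightarrow> (real \<Rightarrow> real) list \<Rightarrow> real \<Rightarrow> (nat \<Rightarrow> real) \<Rightarrow> real" where
  "lagrangian \<Delta> gs lam v = objective gs v - lam * ((\<Sum>i<length gs. v i) - \<Delta>)"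

(* optimal Lagrange multiplier of the inventory constraint (no duality gap):
   lam \<ge> 0 and eta_OPT = sup over the domain of the Lagrangian *)
definition opt_multiplier :: "real \<Rightarrow> (real \<Rightarrow> real) list \<Rightarrow> real \<Rightarrow> bool" where
  "opt_multiplier \<Delta> gs lam \<longleftrightarrow> 0 \<le> lam \<and>
     eta_OPT \<Delta> gs = (SUP v\<in>{v. \<forall>i<length gs. v i \<in> {0..\<Delta>}}. lagrangian \<Delta> gs lam v)"

end

theory Submission
  imports Defs
begin

lemma obj_split:
  "objective (ps @ [g]) v = objective ps v + g (v (length ps))"
proof -
  have "objective (ps @ [g]) v = (\<Sum>i<length ps. ((ps@[g]) ! i) (v i)) + g (v (length ps))"
    by (simp add: objective_def)
  also have "(\<Sum>i<length ps. ((ps@[g]) ! i) (v i)) = objective ps v"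
    unfolding objective_def by (rule sum.cong) (auto simp: nth_append)
  finally show ?thesis .
qed

lemma obj_cong:
  assumes "\<And>i. i < length ps \<Longrightarrow> v i = w i"
  shows "objective ps v = objective ps w"
  unfolding objective_def using assms by (intro sum.cong) auto

lemma feas_le:
  assumes "feasible \<Delta> gs v" "i < length gs"
  shows "0 \<le> v i" "v i \<le> \<Delta>"
proof -
  show "0 \<le> v i" using assms unfolding feasible_def by auto
  have "v i \<le> (\<Sum>j<length gs. v j)"
    using assms unfolding feasible_def by (intro member_le_sum) auto
  then show "v i \<le> \<Delta>" using assms unfolding feasible_def by auto
qed

lemma lag_bdd:
  assumes "\<forall>g\<in>set gs. mono_on {0..\<Delta>} g" "0 \<le> lam" "0 \<le> \<Delta>"
  shows "bdd_above ((lagrangian \<Delta> gs lam) ` {v. \<forall>i<length gs. v i \<in> {0..\<Delta>}})"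
proof (rule bdd_aboveI2)
  fix v assume v: "v \<in> {v. \<forall>i<length gs. v i \<in> {0..\<Delta>}}"
  have "objective gs v \<le> (\<Sum>i<length gs. (gs ! i) \<Delta>)"
    unfolding objective_def
  proof (rule sum_mono)
    fix i assume "i \<in> {..<length gs}"
    then have "mono_on {0..\<Delta>} (gs ! i)" "v i \<in> {0..\<Delta>}" using assms v by auto
    then show "(gs ! i) (v i) \<le> (gs ! i) \<Delta>" using assms(3)
      by (auto simp: mono_on_def)
  qed
  moreover have "0 \<le> (\<Sum>i<length gs. v i)" using v by (intro sum_nonneg) auto
  ultimately show "lagrangian \<Delta> gs lam v \<le> (\<Sum>i<length gs. (gs ! i) \<Delta>) + lam * \<Delta>"
  proof -
    have "0 \<le> lam * (\<Sum>i<length gs. v i)" using assms(2) \<open>0 \<le> (\<Sum>i<length gs. v i)\<close> by simp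
    then show ?thesis unfolding lagrangian_def using \<open>objective gs v \<le> _\<close> by (simp add: algebra_simps)
  qed
qed

lemma lag_le_eta:
  assumes "opt_multiplier \<Delta> gs lam" "\<forall>g\<in>set gs. mono_on {0..\<Delta>} g" "0 \<le> \<Delta>"
    and "\<forall>i<length gs. v i \<in> {0..\<Delta>}"
  shows "lagrangian \<Delta> gs lam v \<le> eta_OPT \<Delta> gs"
proof -
  have "0 \<le> lam" using assms(1) by (simp add: opt_multiplier_def)
  then show ?thesis using assms lag_bdd[of gs \<Delta> lam]
    unfolding opt_multiplier_def by (auto intro: cSUP_upper)
qed

lemma core:
  fixes ps :: "(real \<Rightarrow> real) list" and g :: "real \<Rightarrow> real"
  assumes D: "0 < \<Delta>" and mono: "\<forall>h\<in>set (ps@[g]). mono_on {0..\<Delta>} h"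
    and lp: "if ps = [] then lp = 0 else opt_multiplier \<Delta> ps lp"
    and lt: "opt_multiplier \<Delta> (ps@[g]) lt"
    and vt: "opt_solution \<Delta> (ps@[g]) vt"
    and vh: "vh \<in> {0..\<Delta>}" "\<forall>x\<in>{0..\<Delta>}. g x \<le> g vh"
  shows "eta_OPT \<Delta> (ps@[g]) - eta_OPT \<Delta> ps \<ge> g (vt (length ps)) - lt * vt (length ps)
       \<and> eta_OPT \<Delta> (ps@[g]) - eta_OPT \<Delta> ps \<le> g (vt (length ps)) - lp * vt (length ps)
       \<and> g (vt (length ps)) - lp * vt (length ps) \<le> g vh"
proof -
  define n where "n = length ps"
  have fvt: "feasible \<Delta> (ps@[g]) vt" and ovt: "objective (ps@[g]) vt = eta_OPT \<Delta> (ps@[g])"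
    using vt by (auto simp: opt_solution_def)
  have vtn: "0 \<le> vt n" "vt n \<le> \<Delta>" using feas_le[OF fvt, of n] by (auto simp: n_def)
  have vti: "\<And>i. i < n \<Longrightarrow> vt i \<in> {0..\<Delta>}" using feas_le[OF fvt] by (auto simp: n_def)
  have lpnn: "0 \<le> lp" using lp by (auto simp: opt_multiplier_def split: if_splits)
  have ltnn: "0 \<le> lt" using lt by (simp add: opt_multiplier_def)
  have sumvt: "(\<Sum>i<n. vt i) + vt n \<le> \<Delta>" using fvt by (simp add: feasible_def n_def)
  have eta_eq: "eta_OPT \<Delta> (ps@[g]) = objective ps vt + g (vt n)"
    using ovt obj_split[of ps g vt] by (simp add: n_def)
  have p1: "eta_OPT \<Delta> ps \<le> eta_OPT \<Delta> (ps@[g]) - g (vt n) + lt * vt n"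
    unfolding eta_OPT_def[of \<Delta> ps]
  proof (rule cSup_least)
    show "{objective ps v |v. feasible \<Delta> ps v} \<noteq> {}"
      using D by (auto simp: feasible_def intro!: exI[of _ "\<lambda>_. 0"])
  next
    fix x assume "x \<in> {objective ps v |v. feasible \<Delta> ps v}"
    then obtain w where x: "x = objective ps w" and fw: "feasible \<Delta> ps w" by auto
    define v where "v = w(n := vt n)"
    have box: "\<forall>i<length (ps@[g]). v i \<in> {0..\<Delta>}"
      using feas_le[OF fw] vtn by (auto simp: v_def n_def less_Suc_eq)
    have ov: "objective ps v = objective ps w" by (rule obj_cong) (auto simp: v_def n_def)
    have sv: "(\<Sum>i<n. v i) = (\<Sum>i<n. w i)" by (rule sum.cong) (auto simp: v_def)
    have sw: "(\<Sum>i<n. w i) \<le> \<Delta>" using fw by (simp add: feasible_def n_def)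
    have "lagrangian \<Delta> (ps@[g]) lt v \<le> eta_OPT \<Delta> (ps@[g])"
      using lag_le_eta[OF lt mono _ box] D by simp
    moreover have "lagrangian \<Delta> (ps@[g]) lt v
        = objective ps w + g (vt n) - lt * ((\<Sum>i<n. w i) + vt n - \<Delta>)"
      unfolding lagrangian_def using obj_split[of ps g v] ov sv
      by (simp add: n_def v_def)
    moreover have "lt * ((\<Sum>i<n. w i) - \<Delta>) \<le> 0"
      using ltnn sw by (simp add: mult_nonneg_nonpos)
    ultimately show "x \<le> eta_OPT \<Delta> (ps@[g]) - g (vt n) + lt * vt n"
      using x by (simp add: algebra_simps)
  qed
  have p2: "objective ps vt + lp * vt n \<le> eta_OPT \<Delta> ps"
  proof (cases "ps = []")
    case True
    then have "lp = 0" using lp by simp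
    moreover have "eta_OPT \<Delta> [] = 0"
    proof -
      have "{objective [] v |v. feasible \<Delta> [] v} = {0}"
        using D by (auto simp: objective_def feasible_def)
      then show ?thesis by (simp add: eta_OPT_def)
    qed
    ultimately show ?thesis using True by (simp add: objective_def)
  next
    case False
    then have ml: "opt_multiplier \<Delta> ps lp" using lp by simp
    have "lagrangian \<Delta> ps lp vt \<le> eta_OPT \<Delta> ps"
      using lag_le_eta[OF ml _ _] mono D vti by (auto simp: n_def)
    moreover have "lp * vt n \<le> - lp * ((\<Sum>i<n. vt i) - \<Delta>)"
      using lpnn sumvt mult_left_mono[of "vt n" "\<Delta> - (\<Sum>i<n. vt i)" lp]
      by (simp add: algebra_simps)
    ultimately show ?thesis unfolding lagrangian_def by (simp add: n_def)
  qed
  have p3: "g (vt n) - lp * vt n \<le> g vh"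
    using vh vtn lpnn by (smt (verit) atLeastAtMost_iff mult_nonneg_nonneg)
  show ?thesis using p1 p2 p3 eta_eq by (simp add: n_def)
qed

theorem lemma2:
  fixes \<Delta> m M :: real and \<sigma> :: "(real \<Rightarrow> real) list" and t :: nat
    and lam_prev lam_t v_hat :: real and v_tilde :: "nat \<Rightarrow> real"
  assumes "0 < \<Delta>" and "0 < m" and "m \<le> M"
    and "\<sigma> \<noteq> []" and "\<forall>g\<in>set \<sigma>. inG \<Delta> m M g"
    and "1 \<le> t" and "t \<le> length \<sigma>"
    and "if t = 1 then lam_prev = 0 else opt_multiplier \<Delta> (take (t - 1) \<sigma>) lam_prev"
    and "opt_multiplier \<Delta> (take t \<sigma>) lam_t"
    and "opt_solution \<Delta> (take t \<sigma>) v_tilde"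
    and "v_hat \<in> {0..\<Delta>}" and "\<forall>x\<in>{0..\<Delta>}. (\<sigma> ! (t - 1)) x \<le> (\<sigma> ! (t - 1)) v_hat"
  shows "eta_OPT \<Delta> (take t \<sigma>) - eta_OPT \<Delta> (take (t - 1) \<sigma>)
           \<ge> (\<sigma> ! (t - 1)) (v_tilde (t - 1)) - lam_t * v_tilde (t - 1)
       \<and> eta_OPT \<Delta> (take t \<sigma>) - eta_OPT \<Delta> (take (t - 1) \<sigma>)
           \<le> (\<sigma> ! (t - 1)) (v_tilde (t - 1)) - lam_prev * v_tilde (t - 1)
       \<and> (\<sigma> ! (t - 1)) (v_tilde (t - 1)) - lam_prev * v_tilde (t - 1)
           \<le> (\<sigma> ! (t - 1)) v_hat"
proof -
  define ps where "ps = take (t - 1) \<sigma>"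
  define g where "g = \<sigma> ! (t - 1)"
  have tk: "take t \<sigma> = ps @ [g]"
    using assms(6,7) unfolding ps_def g_def
    by (metis Suc_diff_1 Suc_le_lessD less_le_trans order.refl take_Suc_conv_app_nth zero_less_one)
  have len: "length ps = t - 1" using assms(6,7) by (simp add: ps_def)
  have mono: "\<forall>h\<in>set (ps@[g]). mono_on {0..\<Delta>} h"
    using assms(5) unfolding tk[symmetric] inG_def by (meson in_set_takeD)
  have emp: "(ps = []) = (t = 1)" using assms(4,6,7) by (auto simp: ps_def)
  have lp: "if ps = [] then lam_prev = 0 else opt_multiplier \<Delta> ps lam_prev"
    using assms(8) emp by (simp add: ps_def del: One_nat_def)
  show ?thesis
    using core[OF assms(1) mono lp, of lam_t v_tilde v_hat] assms(9,10,11,12) tk len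
    unfolding ps_def[symmetric] g_def[symmetric] by simp
qed

end
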